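(* Under the scaled-down notification (SDN) policy, for every volunteer $v\in[V]$ and every $t\in[T]$, the probability that $v$ is active in period $t$ equals $\beta_{v,t}$; moreover, $\beta_{v,t}\ge\frac{1}{2-q}$.
   Context: Online volunteer notification problem. An instance consists of volunteers $[V]$, task types $[S]$, horizon $T$, arrival probabilities $\lambda_{s,t}\ge0$ with $\sum_s\lambda_{s,t}\le1$, match probabilities $p_{v,s}\in[0,1]$, and a probability mass function $g$ on the positive integers with CDF $G(\tau)=\sum_{i\le\tau}g(i)$, $G(0)=0$. In each period $t$ at most one task arrives, of type $s$ with probability $\lambda_{s,t}$, independently across periods. All volunteers start active. Upon an arrival the platform notifies a subset of volunteers; each notified active volunteer $v$ responds positively independently with probability $p_{v,s}$. A volunteer active and notified at time $t$ becomes inactive (regardless of response) and active again at $t+Z$, $Z\sim g$ independent; inactive volunteers ignore notifications and are unaffected by them. MDHR: $q=\min_{\tau\in\mathbb{N}}\frac{g(\tau)}{1-G(\tau-1)}$ (with $\frac00:=1$). Ex ante solution: $\mathcal{P}$ is the set of $\mathbf{x}$ with $0\le x_{v,s,t}\le1$ and $\sum_{\tau=1}^t\sum_s\lambda_{s,\tau}x_{v,s,\tau}(1-G(t-\tau))\le1$ for all $v,t$; $f(\mathbf{x})=\sum_{t,s}\lambda_{s,t}(1-\prod_v(1-x_{v,s,t}p_{v,s}))$; $\mathbf{x}^*_{LP}$ maximizes $\sum_{t,s}\lambda_{s,t}\min\{\sum_vx_{v,s,t}p_{v,s},1\}$ over $\mathcal{P}$; $\mathbf{x}^*_{AA}$ is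 the output of: $\mathbf{x}^0=\mathbf{0}$, for $i=1..m$ ($m\in\mathbb{N}$) $\mathbf{y}^i\in\arg\max_{\mathbf{x}\in\mathcal{P}}\langle\mathbf{x},\nabla f(\mathbf{x}^{i-1})\rangle$, $\mathbf{x}^i=\mathbf{x}^{i-1}+\mathbf{y}^i/m$, output $\mathbf{x}^m$; $\mathbf{x}^*_{SQ}$ built for $v=1..V$ in order, $(x^{SQ}_{v,s,t})_{s,t}$ optimal for $\max\sum_{t,s}\lambda_{s,t}\prod_{u<v}(1-p_{u,s}x^{SQ}_{u,s,t})p_{v,s}x_{v,s,t}$ s.t. $0\le x_{v,s,t}\le1$ and $\sum_{\tau\le t}\sum_s\lambda_{s,\tau}x_{v,s,\tau}(1-G(t-\tau))\le1$ for all $t$; $\mathbf{x}^*\in\arg\max_{\mathbf{x}\in\{\mathbf{x}^*_{LP},\mathbf{x}^*_{AA},\mathbf{x}^*_{SQ}\}}f(\mathbf{x})$. SDN policy: $\beta_{v,1}=1$ and $\beta_{v,t}=1-\sum_{t'=1}^{t-1}\sum_{s=1}^S\lambda_{s,t'}\frac{x^*_{v,s,t'}}{2-q}(1-G(t-t'))$ for $t\ge2$; when a task of type $s$ arrives at time $t$, each volunteer $v$ is notified independently with probability $\frac{x^*_{v,s,t}}{(2-q)\beta_{v,t}}$. *)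

theory Defs
  imports "HOL-Probability.Probability"
begin

text \<open>Indexing conventions: volunteers v in {1..V}, task types s in {1..S},
  periods t in {1..T}. lam s t = arrival probability, p v s = match probability,
  g = pmf of the inactivity duration Z (supported on positive integers),
  solutions x v s t (zero outside the index domain).\<close>

definition cdfG :: "nat pmf \<Rightarrow> nat \<Rightarrow> real" where
  "cdfG g \<tau> = (\<Sum>i\<in>{1..\<tau>}. pmf g i)"

definition hazard :: "nat pmf \<Rightarrow> nat \<Rightarrow> real" where
  "hazard g \<tau> = (if pmf g \<tau> = 0 \<and> 1 - cdfG g (\<tau> - 1) = 0 then 1
                  else pmf g \<tau> / (1 - cdfG g (\<tau> - 1)))"

definition mdhr :: "nat pmf \<Rightarrow> real" where
  "mdhr g = (INF \<tau>\<in>{1..}. hazard g \<tau>)"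

definition row_feasible ::
  "nat \<Rightarrow> nat \<Rightarrow> (nat \<Rightarrow> nat \<Rightarrow> real) \<Rightarrow> nat pmf \<Rightarrow> (nat \<Rightarrow> nat \<Rightarrow> real) \<Rightarrow> bool" where
  "row_feasible S T lam g y \<longleftrightarrow>
     (\<forall>s t. s \<notin> {1..S} \<or> t \<notin> {1..T} \<longrightarrow> y s t = 0) \<and>
     (\<forall>s\<in>{1..S}. \<forall>t\<in>{1..T}. 0 \<le> y s t \<and> y s t \<le> 1) \<and>
     (\<forall>t\<in>{1..T}. (\<Sum>\<tau>\<in>{1..t}. \<Sum>s\<in>{1..S}. lam s \<tau> * y s \<tau> * (1 - cdfG g (t - \<tau>))) \<le> 1)"

definition polyP ::
  "nat \<Rightarrow> nat \<Rightarrow> nat \<Rightarrow> (nat \<Rightarrow> nat \<Rightarrow> real) \<Rightarrow> nat pmf \<Rightarrow> (nat \<Rightarrow> nat \<Rightarrow> nat \<Rightarrow> real) set" where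
  "polyP V S T lam g = {x. (\<forall>v\<in>{1..V}. row_feasible S T lam g (x v)) \<and>
                          (\<forall>v. v \<notin> {1..V} \<longrightarrow> x v = (\<lambda>s t. 0))}"

definition obj_f ::
  "nat \<Rightarrow> nat \<Rightarrow> nat \<Rightarrow> (nat \<Rightarrow> nat \<Rightarrow> real) \<Rightarrow> (nat \<Rightarrow> nat \<Rightarrow> real) \<Rightarrow> (nat \<Rightarrow> nat \<Rightarrow> nat \<Rightarrow> real) \<Rightarrow> real" where
  "obj_f V S T lam p x = (\<Sum>t\<in>{1..T}. \<Sum>s\<in>{1..S}.
       lam s t * (1 - (\<Prod>v\<in>{1..V}. 1 - x v s t * p v s)))"

definition grad_f ::
  "nat \<Rightarrow> nat \<Rightarrow> nat \<Rightarrow> (nat \<Rightarrow> nat \<Rightarrow> real) \<Rightarrow> (nat \<Rightarrow> nat \<Rightarrow> real) \<Rightarrow> (nat \<Rightarrow> nat \<Rightarrow> nat \<Rightarrow> real) \<Rightarrow> (nat \<Rightarrow> nat \<Rightarrow> nat \<Rightarrow> real)" where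
  "grad_f V S T lam p x = (\<lambda>v s t. if v \<in> {1..V} \<and> s \<in> {1..S} \<and> t \<in> {1..T}
       then lam s t * p v s * (\<Prod>u\<in>{1..V} - {v}. 1 - x u s t * p u s) else 0)"

definition inner3 ::
  "nat \<Rightarrow> nat \<Rightarrow> nat \<Rightarrow> (nat \<Rightarrow> nat \<Rightarrow> nat \<Rightarrow> real) \<Rightarrow> (nat \<Rightarrow> nat \<Rightarrow> nat \<Rightarrow> real) \<Rightarrow> real" where
  "inner3 V S T x y = (\<Sum>v\<in>{1..V}. \<Sum>s\<in>{1..S}. \<Sum>t\<in>{1..T}. x v s t * y v s t)"

definition lp_obj ::
  "nat \<Rightarrow> nat \<Rightarrow> nat \<Rightarrow> (nat \<Rightarrow> nat \<Rightarrow> real) \<Rightarrow> (nat \<Rightarrow> nat \<Rightarrow> real) \<Rightarrow> (nat \<Rightarrow> nat \<Rightarrow> nat \<Rightarrow> real) \<Rightarrow> real" where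
  "lp_obj V S T lam p x = (\<Sum>t\<in>{1..T}. \<Sum>s\<in>{1..S}.
       lam s t * min (\<Sum>v\<in>{1..V}. x v s t * p v s) 1)"

definition is_LP_opt where
  "is_LP_opt V S T lam p g x \<longleftrightarrow> x \<in> polyP V S T lam g \<and>
     (\<forall>y\<in>polyP V S T lam g. lp_obj V S T lam p y \<le> lp_obj V S T lam p x)"

definition is_AA_output where
  "is_AA_output V S T lam p g x \<longleftrightarrow>
     (\<exists>m::nat. m > 0 \<and> (\<exists>xs ys :: nat \<Rightarrow> nat \<Rightarrow> nat \<Rightarrow> nat \<Rightarrow> real.
        xs 0 = (\<lambda>v s t. 0) \<and>
        (\<forall>i\<in>{1..m}.
           ys i \<in> polyP V S T lam g \<and>
           (\<forall>z\<in>polyP V S T lam g.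
              inner3 V S T z (grad_f V S T lam p (xs (i - 1)))
                \<le> inner3 V S T (ys i) (grad_f V S T lam p (xs (i - 1)))) \<and>
           xs i = (\<lambda>v s t. xs (i - 1) v s t + ys i v s t / real m)) \<and>
        x = xs m))"

definition sq_obj ::
  "nat \<Rightarrow> nat \<Rightarrow> (nat \<Rightarrow> nat \<Rightarrow> real) \<Rightarrow> (nat \<Rightarrow> nat \<Rightarrow> real) \<Rightarrow> (nat \<Rightarrow> nat \<Rightarrow> nat \<Rightarrow> real) \<Rightarrow> nat \<Rightarrow> (nat \<Rightarrow> nat \<Rightarrow> real) \<Rightarrow> real" where
  "sq_obj S T lam p x v y = (\<Sum>t\<in>{1..T}. \<Sum>s\<in>{1..S}.
       lam s t * (\<Prod>u\<in>{1..<v}. 1 - p u s * x u s t) * p v s * y s t)"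

definition is_SQ_output where
  "is_SQ_output V S T lam p g x \<longleftrightarrow>
     (\<forall>v. v \<notin> {1..V} \<longrightarrow> x v = (\<lambda>s t. 0)) \<and>
     (\<forall>v\<in>{1..V}. row_feasible S T lam g (x v) \<and>
        (\<forall>y. row_feasible S T lam g y \<longrightarrow> sq_obj S T lam p x v y \<le> sq_obj S T lam p x v (x v)))"

definition is_ex_ante_solution where
  "is_ex_ante_solution V S T lam p g xs \<longleftrightarrow>
     (\<exists>xLP xAA xSQ. is_LP_opt V S T lam p g xLP \<and> is_AA_output V S T lam p g xAA \<and>
        is_SQ_output V S T lam p g xSQ \<and> xs \<in> {xLP, xAA, xSQ} \<and>
        obj_f V S T lam p xLP \<le> obj_f V S T lam p xs \<and>
        obj_f V S T lam p xAA \<le> obj_f V S T lam p xs \<and>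
        obj_f V S T lam p xSQ \<le> obj_f V S T lam p xs)"

definition sdn_beta ::
  "nat \<Rightarrow> (nat \<Rightarrow> nat \<Rightarrow> real) \<Rightarrow> nat pmf \<Rightarrow> (nat \<Rightarrow> nat \<Rightarrow> nat \<Rightarrow> real) \<Rightarrow> nat \<Rightarrow> nat \<Rightarrow> real" where
  "sdn_beta S lam g x v t = 1 - (\<Sum>t'\<in>{1..<t}. \<Sum>s\<in>{1..S}.
       lam s t' * (x v s t' / (2 - mdhr g)) * (1 - cdfG g (t - t')))"

definition sdn_notif ::
  "nat \<Rightarrow> (nat \<Rightarrow> nat \<Rightarrow> real) \<Rightarrow> nat pmf \<Rightarrow> (nat \<Rightarrow> nat \<Rightarrow> nat \<Rightarrow> real) \<Rightarrow> nat \<Rightarrow> nat \<Rightarrow> nat \<Rightarrow> real" where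
  "sdn_notif S lam g x v s t = x v s t / ((2 - mdhr g) * sdn_beta S lam g x v t)"

definition arrival_pmf :: "nat \<Rightarrow> (nat \<Rightarrow> nat \<Rightarrow> real) \<Rightarrow> nat \<Rightarrow> nat option pmf" where
  "arrival_pmf S lam t = embed_pmf (\<lambda>a. case a of
       None \<Rightarrow> 1 - (\<Sum>s\<in>{1..S}. lam s t)
     | Some s \<Rightarrow> (if s \<in> {1..S} then lam s t else 0))"

text \<open>System state r: volunteer v is active in period t iff r v \<le> t
  (r v = the period in which v becomes active again).\<close>
definition sdn_step ::
  "nat \<Rightarrow> nat \<Rightarrow> (nat \<Rightarrow> nat \<Rightarrow> real) \<Rightarrow> nat pmf \<Rightarrow> (nat \<Rightarrow> nat \<Rightarrow> nat \<Rightarrow> real) \<Rightarrow> nat \<Rightarrow> (nat \<Rightarrow> nat) \<Rightarrow> (nat \<Rightarrow> nat) pmf" where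
  "sdn_step V S lam g x t r = bind_pmf (arrival_pmf S lam t) (\<lambda>a. case a of
       None \<Rightarrow> return_pmf r
     | Some s \<Rightarrow> Pi_pmf {1..V} 0 (\<lambda>v.
          if r v \<le> t then
            bind_pmf (bernoulli_pmf (sdn_notif S lam g x v s t))
              (\<lambda>b. if b then map_pmf (\<lambda>z. t + z) g else return_pmf (r v))
          else return_pmf (r v)))"

text \<open>sdn_state ... n = distribution of the state after periods 1..n,
  i.e. at the start of period n+1.  Initially all volunteers are active.\<close>
primrec sdn_state ::
  "nat \<Rightarrow> nat \<Rightarrow> (nat \<Rightarrow> nat \<Rightarrow> real) \<Rightarrow> nat pmf \<Rightarrow> (nat \<Rightarrow> nat \<Rightarrow> nat \<Rightarrow> real) \<Rightarrow> nat \<Rightarrow> (nat \<Rightarrow> nat) pmf" where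
  "sdn_state V S lam g x 0 = return_pmf (\<lambda>v. 0)"
| "sdn_state V S lam g x (Suc n) =
     bind_pmf (sdn_state V S lam g x n) (sdn_step V S lam g x (Suc n))"

end

theory Submission
  imports Defs
begin

lemma cdfG_nonneg: "0 \<le> cdfG g t"
  unfolding cdfG_def by (simp add: sum_nonneg)

lemma cdfG_le1: "cdfG g t \<le> 1"
proof -
  have "cdfG g t = measure_pmf.prob g {1..t}"
    unfolding cdfG_def by (simp add: measure_measure_pmf_finite)
  also have "\<dots> \<le> 1" by simp
  finally show ?thesis .
qed

lemma cdfG_Suc: "cdfG g (Suc t) = cdfG g t + pmf g (Suc t)"
  unfolding cdfG_def by simp

lemma cdfG_0: "cdfG g 0 = 0"
  unfolding cdfG_def by simp

lemma hazard_nonneg: "0 \<le> hazard g t"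
  unfolding hazard_def using cdfG_le1[of g "t - 1"] by auto

lemma mdhr_le_hazard: "1 \<le> t \<Longrightarrow> mdhr g \<le> hazard g t"
  unfolding mdhr_def
  by (rule cINF_lower) (auto intro: bdd_belowI2[where m=0] hazard_nonneg)

lemma mdhr_le1: "mdhr g \<le> 1"
proof -
  have "hazard g 1 \<le> 1"
    unfolding hazard_def using cdfG_0[of g] pmf_le_1[of g 1] by auto
  then show ?thesis using mdhr_le_hazard[of 1 g] by simp
qed

lemma tail_hazard:
  assumes "1 \<le> t"
  shows "1 - cdfG g t \<le> (1 - mdhr g) * (1 - cdfG g (t - 1))"
proof -
  obtain u where t: "t = Suc u" using assms by (cases t) auto
  have G: "cdfG g t = cdfG g u + pmf g t" using cdfG_Suc t by simp
  have q: "mdhr g \<le> hazard g t" using mdhr_le_hazard assms by blast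
  show ?thesis
  proof (cases "1 - cdfG g u = 0")
    case True
    then show ?thesis using G t by simp
  next
    case False
    then have pos: "1 - cdfG g u > 0" using cdfG_le1[of g u] by simp
    have "hazard g t = pmf g t / (1 - cdfG g u)"
      using False t unfolding hazard_def by simp
    then have "mdhr g * (1 - cdfG g u) \<le> pmf g t"
      using q pos by (simp add: pos_le_divide_eq)
    then show ?thesis using G t by (simp add: algebra_simps)
  qed
qed

lemma AA_feasible:
  assumes "is_AA_output V S T lam p g x" "v \<in> {1..V}"
  shows "row_feasible S T lam g (x v)"
proof -
  obtain m xs ys where m: "m > (0::nat)" and x0: "xs 0 = (\<lambda>v s t. 0)"
    and step: "\<forall>i\<in>{1..m}. ys i \<in> polyP V S T lam g \<and>
           (\<forall>z\<in>polyP V S T lam g.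
              inner3 V S T z (grad_f V S T lam p (xs (i - 1)))
                \<le> inner3 V S T (ys i) (grad_f V S T lam p (xs (i - 1)))) \<and>
           xs i = (\<lambda>v s t. xs (i - 1) v s t + ys i v s t / real m)"
    and xm: "x = xs m"
    using assms(1) unfolding is_AA_output_def by blast
  define L where "L y t = (\<Sum>\<tau>\<in>{1..t}. \<Sum>s\<in>{1..S}. lam s \<tau> * y s \<tau> * (1 - cdfG g (t - \<tau>)))" for y :: "nat \<Rightarrow> nat \<Rightarrow> real" and t
  have Llin: "L (\<lambda>s t. a s t + b s t / real m) t = L a t + L b t / real m" for a b t
  proof -
    have "L (\<lambda>s t. a s t + b s t / real m) t = (\<Sum>\<tau>\<in>{1..t}. \<Sum>s\<in>{1..S}.
       lam s \<tau> * a s \<tau> * (1 - cdfG g (t - \<tau>)) + lam s \<tau> * b s \<tau> * (1 - cdfG g (t - \<tau>)) / real m)"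
      unfolding L_def by (intro sum.cong refl) (simp add: field_simps)
    also have "\<dots> = L a t + L b t / real m"
      unfolding L_def by (simp add: sum.distrib sum_divide_distrib)
    finally show ?thesis .
  qed
  have claim: "i \<le> m \<Longrightarrow> (\<forall>s t. s \<notin> {1..S} \<or> t \<notin> {1..T} \<longrightarrow> xs i v s t = 0) \<and>
     (\<forall>s\<in>{1..S}. \<forall>t\<in>{1..T}. 0 \<le> xs i v s t \<and> xs i v s t \<le> real i / real m) \<and>
     (\<forall>t\<in>{1..T}. L (xs i v) t \<le> real i / real m)" for i
  proof (induction i)
    case 0
    then show ?case using x0 by (simp add: L_def)
  next
    case (Suc i)
    then have IH: "(\<forall>s t. s \<notin> {1..S} \<or> t \<notin> {1..T} \<longrightarrow> xs i v s t = 0) \<and>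
     (\<forall>s\<in>{1..S}. \<forall>t\<in>{1..T}. 0 \<le> xs i v s t \<and> xs i v s t \<le> real i / real m) \<and>
     (\<forall>t\<in>{1..T}. L (xs i v) t \<le> real i / real m)" by simp
    have st: "ys (Suc i) \<in> polyP V S T lam g" and xsS: "xs (Suc i) = (\<lambda>v s t. xs i v s t + ys (Suc i) v s t / real m)"
      using step Suc.prems by auto
    have rf: "row_feasible S T lam g (ys (Suc i) v)"
      using st assms(2) unfolding polyP_def by blast
    have xv: "xs (Suc i) v = (\<lambda>s t. xs i v s t + ys (Suc i) v s t / real m)"
      using xsS by simp
    have A: "\<forall>s t. s \<notin> {1..S} \<or> t \<notin> {1..T} \<longrightarrow> xs (Suc i) v s t = 0"
      using IH rf unfolding row_feasible_def xv by auto
    have B: "\<forall>s\<in>{1..S}. \<forall>t\<in>{1..T}. 0 \<le> xs (Suc i) v s t \<and> xs (Suc i) v s t \<le> real (Suc i) / real m"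
    proof (intro ballI)
      fix s t assume s: "s \<in> {1..S}" and t: "t \<in> {1..T}"
      have "0 \<le> ys (Suc i) v s t" "ys (Suc i) v s t \<le> 1"
        using rf s t unfolding row_feasible_def by auto
      moreover have "0 \<le> xs i v s t" "xs i v s t \<le> real i / real m" using IH s t by auto
      moreover have "ys (Suc i) v s t / real m \<le> 1 / real m" "0 \<le> ys (Suc i) v s t / real m"
        using calculation m by (simp_all add: divide_right_mono)
      moreover have "real (Suc i) / real m = real i / real m + 1 / real m"
        by (simp add: add_divide_distrib)
      ultimately show "0 \<le> xs (Suc i) v s t \<and> xs (Suc i) v s t \<le> real (Suc i) / real m"
        unfolding xv by linarith
    qed
    have C: "\<forall>t\<in>{1..T}. L (xs (Suc i) v) t \<le> real (Suc i) / real m"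
    proof
      fix t assume t: "t \<in> {1..T}"
      have "L (ys (Suc i) v) t \<le> 1" using rf t unfolding row_feasible_def L_def by auto
      moreover have "L (xs i v) t \<le> real i / real m" using IH t by auto
      moreover have "L (ys (Suc i) v) t / real m \<le> 1 / real m"
        using calculation m by (simp_all add: divide_right_mono)
      moreover have "real (Suc i) / real m = real i / real m + 1 / real m"
        by (simp add: add_divide_distrib)
      ultimately show "L (xs (Suc i) v) t \<le> real (Suc i) / real m"
        unfolding xv Llin by linarith
    qed
    show ?case using A B C by blast
  qed
  from claim[of m] m show ?thesis unfolding xm row_feasible_def L_def by auto
qed

lemma xstar_feasible:
  assumes "is_ex_ante_solution V S T lam p g x" "v \<in> {1..V}"
  shows "row_feasible S T lam g (x v)"
  using assms AA_feasible[OF _ assms(2)]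
  unfolding is_ex_ante_solution_def is_LP_opt_def is_SQ_output_def polyP_def
  by auto


lemma beta_bound:
  assumes lam_nonneg: "\<forall>s\<in>{1..S}. \<forall>t\<in>{1..T}. 0 \<le> lam s t"
    and rf: "row_feasible S T lam g (x v)"
    and t: "t \<in> {1..T}"
  shows "1 / (2 - mdhr g) \<le> sdn_beta S lam g x v t"
proof -
  define q where "q = mdhr g"
  have q1: "q \<le> 1" using mdhr_le1 q_def by simp
  have pos: "2 - q > 0" using q1 by simp
  show ?thesis
  proof (cases "t = 1")
    case True
    then show ?thesis unfolding sdn_beta_def q_def[symmetric] using q1 by simp
  next
    case False
    then obtain u where tu: "t = Suc u" and u: "u \<in> {1..T}" using t by (cases t) auto
    have xb: "\<And>s t. s \<in> {1..S} \<Longrightarrow> t \<in> {1..T} \<Longrightarrow> 0 \<le> x v s t \<and> x v s t \<le> 1"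
      using rf unfolding row_feasible_def by blast
    have L: "(\<Sum>\<tau>\<in>{1..u}. \<Sum>s\<in>{1..S}. lam s \<tau> * x v s \<tau> * (1 - cdfG g (u - \<tau>))) \<le> 1"
      using rf u unfolding row_feasible_def by blast
    have "(\<Sum>t'\<in>{1..<t}. \<Sum>s\<in>{1..S}. lam s t' * (x v s t' / (2 - q)) * (1 - cdfG g (t - t')))
       \<le> (\<Sum>t'\<in>{1..u}. \<Sum>s\<in>{1..S}. (1 - q) / (2 - q) * (lam s t' * x v s t' * (1 - cdfG g (u - t'))))"
      unfolding tu atLeastLessThanSuc_atLeastAtMost
    proof (intro sum_mono)
      fix t' s assume t': "t' \<in> {1..u}" and s: "s \<in> {1..S}"
      have t'T: "t' \<in> {1..T}" using t' u by auto
      have nn: "0 \<le> lam s t' * x v s t' / (2 - q)"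
        using lam_nonneg xb[OF s t'T] s t'T pos by auto
      have h: "1 - cdfG g (Suc u - t') \<le> (1 - q) * (1 - cdfG g (u - t'))"
        using tail_hazard[of "Suc u - t'" g] t' unfolding q_def by (simp add: Suc_diff_le)
      have "lam s t' * (x v s t' / (2 - q)) * (1 - cdfG g (Suc u - t'))
         = (lam s t' * x v s t' / (2 - q)) * (1 - cdfG g (Suc u - t'))" by simp
      also have "\<dots> \<le> (lam s t' * x v s t' / (2 - q)) * ((1 - q) * (1 - cdfG g (u - t')))"
        by (rule mult_left_mono[OF h nn])
      also have "\<dots> = (1 - q) / (2 - q) * (lam s t' * x v s t' * (1 - cdfG g (u - t')))"
        by (simp add: field_simps)
      finally show "lam s t' * (x v s t' / (2 - q)) * (1 - cdfG g (Suc u - t'))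
         \<le> (1 - q) / (2 - q) * (lam s t' * x v s t' * (1 - cdfG g (u - t')))" .
    qed
    also have "\<dots> = (1 - q) / (2 - q) * (\<Sum>\<tau>\<in>{1..u}. \<Sum>s\<in>{1..S}. lam s \<tau> * x v s \<tau> * (1 - cdfG g (u - \<tau>)))"
      by (simp add: sum_distrib_left)
    also have "\<dots> \<le> (1 - q) / (2 - q)"
      using mult_left_mono[OF L, of "(1 - q) / (2 - q)"] q1 pos by simp
    finally have "(\<Sum>t'\<in>{1..<t}. \<Sum>s\<in>{1..S}. lam s t' * (x v s t' / (2 - q)) * (1 - cdfG g (t - t')))
      \<le> (1 - q) / (2 - q)" .
    moreover have "1 - (1 - q) / (2 - q) = 1 / (2 - q)" using pos by (simp add: field_simps)
    ultimately show ?thesis unfolding sdn_beta_def q_def[symmetric] by linarith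
  qed
qed


lemma prob_bind_pmf:
  "measure_pmf.prob (bind_pmf M f) A = (\<integral>x. measure_pmf.prob (f x) A \<partial>M)"
proof -
  have int: "integrable (measure_pmf M) (\<lambda>x. measure_pmf.prob (f x) A)"
    by (rule measure_pmf.integrable_const_bound[where B=1]) auto
  have "emeasure (bind_pmf M f) A = (\<integral>\<^sup>+x. emeasure (f x) A \<partial>M)"
    by (rule emeasure_bind_pmf)
  also have "\<dots> = (\<integral>\<^sup>+x. ennreal (measure_pmf.prob (f x) A) \<partial>M)"
    by (simp add: measure_pmf.emeasure_eq_measure)
  also have "\<dots> = ennreal (\<integral>x. measure_pmf.prob (f x) A \<partial>M)"
    by (rule nn_integral_eq_integral[OF int]) auto
  finally show ?thesis
    by (simp add: measure_pmf.emeasure_eq_measure integral_nonneg_AE)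
qed

lemma pmf_arrival:
  assumes nn: "\<forall>s\<in>{1..S}. 0 \<le> lam s t" and sm: "(\<Sum>s\<in>{1..S}. lam s t) \<le> 1"
  shows "pmf (arrival_pmf S lam t) a = (case a of
       None \<Rightarrow> 1 - (\<Sum>s\<in>{1..S}. lam s t)
     | Some s \<Rightarrow> (if s \<in> {1..S} then lam s t else 0))"
  unfolding arrival_pmf_def
proof (rule pmf_embed_pmf)
  fix x :: "nat option"
  show "0 \<le> (case x of None \<Rightarrow> 1 - (\<Sum>s\<in>{1..S}. lam s t) | Some s \<Rightarrow> (if s \<in> {1..S} then lam s t else 0))"
    using nn sm by (auto split: option.split)
next
  let ?f = "\<lambda>x. ennreal (case x of None \<Rightarrow> 1 - (\<Sum>s\<in>{1..S}. lam s t) | Some s \<Rightarrow> (if s \<in> {1..S} then lam s t else 0))"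
  have "(\<integral>\<^sup>+ x. ?f x \<partial>count_space UNIV) = sum ?f (insert None (Some ` {1..S}))"
    by (rule nn_integral_count_space') (auto split: option.split)
  also have "\<dots> = ennreal (1 - (\<Sum>s\<in>{1..S}. lam s t)) + (\<Sum>s\<in>{1..S}. ennreal (lam s t))"
    by (subst sum.insert) (auto simp: sum.reindex)
  also have "\<dots> = ennreal (1 - (\<Sum>s\<in>{1..S}. lam s t)) + ennreal (\<Sum>s\<in>{1..S}. lam s t)"
    using nn by (subst sum_ennreal) auto
  also have "\<dots> = 1"
    using nn sm by (subst ennreal_plus[symmetric]) (auto intro: sum_nonneg)
  finally show "(\<integral>\<^sup>+ x. ?f x \<partial>count_space UNIV) = 1" .
qed

lemma integral_arrival:
  assumes nn: "\<forall>s\<in>{1..S}. 0 \<le> lam s t" and sm: "(\<Sum>s\<in>{1..S}. lam s t) \<le> 1"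
    and f0: "f None = 0"
  shows "(\<integral>a. f a \<partial>arrival_pmf S lam t) = (\<Sum>s\<in>{1..S}. lam s t * f (Some s))"
proof -
  have "(\<integral>a. f a \<partial>arrival_pmf S lam t) = (\<Sum>a\<in>Some ` {1..S}. f a * pmf (arrival_pmf S lam t) a)"
  proof (rule integral_measure_pmf_real)
    fix a assume a: "a \<in> set_pmf (arrival_pmf S lam t)" "f a \<noteq> 0"
    show "a \<in> Some ` {1..S}"
    proof (cases a)
      case None then show ?thesis using a f0 by simp
    next
      case (Some s)
      then show ?thesis using a pmf_arrival[where S=S and lam=lam and t=t, OF nn sm, of a]
        by (auto simp: set_pmf_iff split: if_splits)
    qed
  qed simp
  also have "\<dots> = (\<Sum>s\<in>{1..S}. lam s t * f (Some s))"
    by (simp add: sum.reindex pmf_arrival[where S=S and lam=lam and t=t, OF nn sm] mult.commute)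
  finally show ?thesis .
qed

definition mstep where
  "mstep S lam g x v t w = bind_pmf (arrival_pmf S lam t) (\<lambda>a. case a of
       None \<Rightarrow> return_pmf w
     | Some s \<Rightarrow> (if w \<le> t then
            bind_pmf (bernoulli_pmf (sdn_notif S lam g x v s t))
              (\<lambda>b. if b then map_pmf (\<lambda>z. t + z) g else return_pmf w)
          else return_pmf w))"

lemma marginal_step:
  assumes v: "v \<in> {1..V}"
  shows "map_pmf (\<lambda>r. r v) (sdn_state V S lam g x (Suc n))
       = bind_pmf (map_pmf (\<lambda>r. r v) (sdn_state V S lam g x n)) (mstep S lam g x v (Suc n))"
proof -
  have "map_pmf (\<lambda>r. r v) (sdn_step V S lam g x (Suc n) r) = mstep S lam g x v (Suc n) (r v)" for r
    unfolding sdn_step_def mstep_def map_bind_pmf using v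
    by (intro bind_pmf_cong refl) (auto split: option.split simp: Pi_pmf_component v)
  then show ?thesis
    by (simp add: map_bind_pmf bind_map_pmf)
qed

lemma mstep_inactive:
  assumes "\<not> w \<le> t"
  shows "mstep S lam g x v t w = return_pmf w"
proof -
  have "(\<lambda>a. case a of
       None \<Rightarrow> return_pmf w
     | Some s \<Rightarrow> (if w \<le> t then
            bind_pmf (bernoulli_pmf (sdn_notif S lam g x v s t))
              (\<lambda>b. if b then map_pmf (\<lambda>z. t + z) g else return_pmf w)
          else return_pmf w)) = (\<lambda>a. return_pmf w)"
    using assms by (auto split: option.split)
  then show ?thesis unfolding mstep_def by (simp add: bind_pmf_const)
qed

lemma tail_g:
  assumes g0: "pmf g 0 = 0"
  shows "measure_pmf.prob g {j<..} = 1 - cdfG g j"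
proof -
  have "measure_pmf.prob g {j<..} = 1 - measure_pmf.prob g {..j}"
    using measure_pmf.prob_compl[of "{..j}" g] by (simp add: Compl_eq_Diff_UNIV[symmetric] Compl_atMost)
  moreover have "measure_pmf.prob g {..j} = cdfG g j"
  proof -
    have "measure_pmf.prob g {..j} = sum (pmf g) {0..j}"
      by (simp add: measure_measure_pmf_finite atLeast0AtMost)
    also have "\<dots> = pmf g 0 + sum (pmf g) {1..j}"
      by (simp add: sum.atLeast_Suc_atMost)
    finally show ?thesis using g0 by (simp add: cdfG_def)
  qed
  ultimately show ?thesis by simp
qed

lemma mstep_active:
  assumes nn: "\<forall>s\<in>{1..S}. 0 \<le> lam s t" and sm: "(\<Sum>s\<in>{1..S}. lam s t) \<le> 1"
    and g0: "pmf g 0 = 0"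
    and pi: "\<forall>s\<in>{1..S}. 0 \<le> sdn_notif S lam g x v s t \<and> sdn_notif S lam g x v s t \<le> 1"
    and w: "w \<le> t" and k: "t \<le> k"
  shows "measure_pmf.prob (mstep S lam g x v t w) {k<..}
     = (\<Sum>s\<in>{1..S}. lam s t * (sdn_notif S lam g x v s t * (1 - cdfG g (k - t))))"
  unfolding mstep_def prob_bind_pmf
proof (subst integral_arrival[where S=S and lam=lam and t=t, OF nn sm])
  show "measure_pmf.prob (case None of None \<Rightarrow> return_pmf w | Some s \<Rightarrow> (if w \<le> t then
            bind_pmf (bernoulli_pmf (sdn_notif S lam g x v s t))
              (\<lambda>b. if b then map_pmf (\<lambda>z. t + z) g else return_pmf w)
          else return_pmf w)) {k<..} = 0"
    using w k by simp
next
  have "measure_pmf.prob (map_pmf (\<lambda>z. t + z) g) {k<..} = 1 - cdfG g (k - t)"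
  proof -
    have "(\<lambda>z. t + z) -` {k<..} = {k - t<..}" using k by auto
    then show ?thesis using tail_g[OF g0, of "k - t"] by simp
  qed
  moreover have "measure_pmf.prob (return_pmf w) {k<..} = 0" using w k by simp
  ultimately show "(\<Sum>s\<in>{1..S}. lam s t * measure_pmf.prob (case Some s of None \<Rightarrow> return_pmf w | Some s \<Rightarrow> (if w \<le> t then
            bind_pmf (bernoulli_pmf (sdn_notif S lam g x v s t))
              (\<lambda>b. if b then map_pmf (\<lambda>z. t + z) g else return_pmf w)
          else return_pmf w)) {k<..})
     = (\<Sum>s\<in>{1..S}. lam s t * (sdn_notif S lam g x v s t * (1 - cdfG g (k - t))))"
    using w pi by (intro sum.cong refl) (simp add: prob_bind_pmf integral_bernoulli_pmf)
qed


lemma int_ind: "integrable (measure_pmf M) (indicator A :: _ \<Rightarrow> real)"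
  by (rule measure_pmf.integrable_const_bound[where B=1]) (auto simp: indicator_def)

lemma main_marg:
  assumes g0: "pmf g 0 = 0"
    and lam_nonneg: "\<forall>s\<in>{1..S}. \<forall>t\<in>{1..T}. 0 \<le> lam s t"
    and lam_sum: "\<forall>t\<in>{1..T}. (\<Sum>s\<in>{1..S}. lam s t) \<le> 1"
    and v: "v \<in> {1..V}"
    and rf: "row_feasible S T lam g (x v)"
  shows "n < T \<Longrightarrow> \<forall>k\<ge>n. measure_pmf.prob (map_pmf (\<lambda>r. r v) (sdn_state V S lam g x n)) {k<..}
     = (\<Sum>t'\<in>{1..n}. \<Sum>s\<in>{1..S}. lam s t' * (x v s t' / (2 - mdhr g)) * (1 - cdfG g (k - t')))"
proof (induction n)
  case 0
  then show ?case by simp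
next
  case (Suc n)
  define D where "D = map_pmf (\<lambda>r. r v) (sdn_state V S lam g x n)"
  define t where "t = Suc n"
  define q where "q = mdhr g"
  define \<beta> where "\<beta> = sdn_beta S lam g x v t"
  have IH: "\<And>k. n \<le> k \<Longrightarrow> measure_pmf.prob D {k<..}
     = (\<Sum>t'\<in>{1..n}. \<Sum>s\<in>{1..S}. lam s t' * (x v s t' / (2 - q)) * (1 - cdfG g (k - t')))"
    using Suc unfolding D_def q_def by auto
  have tT: "t \<in> {1..T}" using Suc.prems t_def by auto
  have q1: "q \<le> 1" using mdhr_le1 q_def by simp
  have pos: "2 - q > 0" using q1 by simp
  have bb: "1 / (2 - q) \<le> \<beta>" using beta_bound[where x=x and v=v, OF lam_nonneg rf tT] unfolding \<beta>_def q_def .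
  have bpos: "\<beta> > 0" using bb pos by (meson less_le_trans zero_less_divide_1_iff)
  have prod1: "1 \<le> (2 - q) * \<beta>" using bb pos by (simp add: divide_le_eq mult.commute)
  have nn: "\<forall>s\<in>{1..S}. 0 \<le> lam s t" and sm: "(\<Sum>s\<in>{1..S}. lam s t) \<le> 1"
    using lam_nonneg lam_sum tT by auto
  have xb: "\<And>s. s \<in> {1..S} \<Longrightarrow> 0 \<le> x v s t \<and> x v s t \<le> 1"
    using rf tT unfolding row_feasible_def by blast
  have notif: "sdn_notif S lam g x v s t = x v s t / ((2 - q) * \<beta>)" for s
    unfolding sdn_notif_def q_def \<beta>_def ..
  have pi: "\<forall>s\<in>{1..S}. 0 \<le> sdn_notif S lam g x v s t \<and> sdn_notif S lam g x v s t \<le> 1"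
  proof
    fix s assume s: "s \<in> {1..S}"
    have "x v s t / ((2 - q) * \<beta>) \<le> 1"
      using xb[OF s] prod1 by (simp add: divide_le_eq)
    moreover have "0 \<le> x v s t / ((2 - q) * \<beta>)" using xb[OF s] prod1 by simp
    ultimately show "0 \<le> sdn_notif S lam g x v s t \<and> sdn_notif S lam g x v s t \<le> 1"
      unfolding notif by simp
  qed
  have "measure_pmf.prob (map_pmf (\<lambda>r. r v) (sdn_state V S lam g x (Suc n))) {k<..}
     = (\<Sum>t'\<in>{1..Suc n}. \<Sum>s\<in>{1..S}. lam s t' * (x v s t' / (2 - q)) * (1 - cdfG g (k - t')))"
    if k: "Suc n \<le> k" for k
  proof -
    define C where "C = (\<Sum>s\<in>{1..S}. lam s t * (sdn_notif S lam g x v s t * (1 - cdfG g (k - t))))"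
    have "measure_pmf.prob (map_pmf (\<lambda>r. r v) (sdn_state V S lam g x (Suc n))) {k<..}
        = (\<integral>w. measure_pmf.prob (mstep S lam g x v t w) {k<..} \<partial>D)"
      unfolding marginal_step[OF v] D_def t_def prob_bind_pmf ..
    also have "\<dots> = (\<integral>w. C * indicator {..t} w + indicator {k<..} w \<partial>D)"
    proof (rule Bochner_Integration.integral_cong[OF refl])
      fix w
      show "measure_pmf.prob (mstep S lam g x v t w) {k<..} = C * indicator {..t} w + indicator {k<..} w"
      proof (cases "w \<le> t")
        case True
        then show ?thesis using mstep_active[where S=S and lam=lam and t=t, OF nn sm g0 pi True] k t_def unfolding C_def
          by (simp add: indicator_def)
      next
        case False
        then show ?thesis using mstep_inactive[OF False] by (simp add: indicator_def)
      qed
    qed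
    also have "\<dots> = C * measure_pmf.prob D {..t} + measure_pmf.prob D {k<..}"
      by (subst Bochner_Integration.integral_add) (auto simp: int_ind)
    also have "measure_pmf.prob D {..t} = \<beta>"
    proof -
      have "measure_pmf.prob D {..t} = 1 - measure_pmf.prob D {t<..}"
        using measure_pmf.prob_compl[of "{t<..}" D]
        by (simp add: Compl_eq_Diff_UNIV[symmetric] Compl_greaterThan)
      also have "\<dots> = \<beta>"
        using IH[of t] unfolding \<beta>_def sdn_beta_def q_def t_def
        by (simp add: atLeastLessThanSuc_atLeastAtMost)
      finally show ?thesis .
    qed
    also have "C * \<beta> = (\<Sum>s\<in>{1..S}. lam s t * (x v s t / (2 - q)) * (1 - cdfG g (k - t)))"
      unfolding C_def sum_distrib_right notif
      using bpos pos by (intro sum.cong refl) (simp add: field_simps)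
    also have "measure_pmf.prob D {k<..} = (\<Sum>t'\<in>{1..n}. \<Sum>s\<in>{1..S}. lam s t' * (x v s t' / (2 - q)) * (1 - cdfG g (k - t')))"
      using IH k by simp
    finally show ?thesis unfolding t_def by simp
  qed
  then show ?case unfolding q_def by blast
qed

theorem lemma7:
  fixes V S T :: nat
    and lam :: "nat \<Rightarrow> nat \<Rightarrow> real"
    and p :: "nat \<Rightarrow> nat \<Rightarrow> real"
    and g :: "nat pmf"
    and xstar :: "nat \<Rightarrow> nat \<Rightarrow> nat \<Rightarrow> real"
  assumes g_pos: "pmf g 0 = 0"
    and lam_nonneg: "\<forall>s\<in>{1..S}. \<forall>t\<in>{1..T}. 0 \<le> lam s t"
    and lam_sum: "\<forall>t\<in>{1..T}. (\<Sum>s\<in>{1..S}. lam s t) \<le> 1"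
    and p_prob: "\<forall>v\<in>{1..V}. \<forall>s\<in>{1..S}. 0 \<le> p v s \<and> p v s \<le> 1"
    and xstar: "is_ex_ante_solution V S T lam p g xstar"
  shows "\<forall>v\<in>{1..V}. \<forall>t\<in>{1..T}.
           measure_pmf.prob (sdn_state V S lam g xstar (t - 1)) {r. r v \<le> t}
             = sdn_beta S lam g xstar v t
           \<and> sdn_beta S lam g xstar v t \<ge> 1 / (2 - mdhr g)"
proof (intro ballI conjI)
  fix v t assume v: "v \<in> {1..V}" and t: "t \<in> {1..T}"
  have rf: "row_feasible S T lam g (xstar v)" by (rule xstar_feasible[OF xstar v])
  show "1 / (2 - mdhr g) \<le> sdn_beta S lam g xstar v t"
    by (rule beta_bound[where x=xstar and v=v, OF lam_nonneg rf t])
  define D where "D = map_pmf (\<lambda>r. r v) (sdn_state V S lam g xstar (t - 1))"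
  have "measure_pmf.prob (sdn_state V S lam g xstar (t - 1)) {r. r v \<le> t} = measure_pmf.prob D {..t}"
    unfolding D_def by (simp add: vimage_def)
  also have "\<dots> = 1 - measure_pmf.prob D {t<..}"
    using measure_pmf.prob_compl[of "{t<..}" D]
    by (simp add: Compl_eq_Diff_UNIV[symmetric] Compl_greaterThan)
  also have "measure_pmf.prob D {t<..} = (\<Sum>t'\<in>{1..t - 1}. \<Sum>s\<in>{1..S}. lam s t' * (xstar v s t' / (2 - mdhr g)) * (1 - cdfG g (t - t')))"
    using main_marg[where x=xstar and S=S and T=T and lam=lam, OF g_pos lam_nonneg lam_sum v rf, of "t - 1"] t unfolding D_def by auto
  also have "{1..t - 1} = {1..<t}" using t by auto
  finally show "measure_pmf.prob (sdn_state V S lam g xstar (t - 1)) {r. r v \<le> t} = sdn_beta S lam g xstar v t"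
    unfolding sdn_beta_def .
qed

end
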